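(* Under the setting and assumptions 1–3 of the \textsc{MeritFed} process described below, with $\gamma\le\frac{1}{2L}$, every iterate satisfies the one-step descent inequality $$\mathbb{E}[f(x^{t+1})]\le\mathbb{E}[f(x^t)]-\frac{\gamma}{2}\mathbb{E}\|\nabla f(x^t)\|^2+\frac{\gamma^2L\sigma^2}{G}+\delta .$$ Setting: $f:\mathbb{R}^d\to\mathbb{R}$, ${\cal G}\subseteq[n]$ nonempty with $G=|{\cal G}|$, and $x^{t+1}=x^t-\gamma\sum_{i=1}^n w_i^{t+1}g_i^t$ with $w^{t+1}\in\Delta_1^n$, where (1) for $i\in{\cal G}$, $\mathbb{E}[g_i^t\mid x^t]=\nabla f(x^t)$, $\mathbb{E}[\|g_i^t-\nabla f(x^t)\|^2\mid x^t]\le\sigma^2$, with the noises $g_i^t-\nabla f(x^t)$, $i\in{\cal G}$, conditionally independent given $x^t$, while $g_i^t$ for $i\notin{\cal G}$ are arbitrary; (2) $f$ is $L$-smooth, i.e. $f(x)\le f(y)+\langle\nabla f(y),x-y\rangle+\frac L2\|x-y\|^2$ for all $x,y$; (3) $\mathbb{E}[f(x^{t+1})\mid x^t,\{g_i^t\}_{i=1}^n]-\min_{w\in\Delta_1^n}f(x^t-\gamma\sum_{i=1}^n w_ig_i^t)\le\delta$.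
   Context: $\Delta_1^n=\{w\in\mathbb{R}^n:\sum_i w_i=1,\ w_i\ge 0\}$ is the unit simplex; $\|\cdot\|$ is the Euclidean norm; $\gamma>0$ is the stepsize and $\delta\ge0$ the accuracy with which the server's weight-selection subproblem is solved. *)

theory Defs
  imports "HOL-Probability.Probability"
begin

text \<open>Unit unit_simplex in R^n, vectors indexed by 1..n (coordinates outside 1..n are irrelevant).\<close>
definition unit_simplex :: "nat \<Rightarrow> (nat \<Rightarrow> real) set" where
  "unit_simplex n = {v. (\<forall>i\<in>{1..n}. 0 \<le> v i) \<and> (\<Sum>i=1..n. v i) = 1}"

definition gen_sigma :: "'a measure \<Rightarrow> ('a \<Rightarrow> 'b::topological_space) set \<Rightarrow> 'a measure" where
  "gen_sigma M Xs = sigma (space M) {X -` A \<inter> space M | X A. X \<in> Xs \<and> A \<in> sets borel}"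

definition cond_indep_vars ::
  "'a measure \<Rightarrow> 'a measure \<Rightarrow> ('i \<Rightarrow> 'a \<Rightarrow> 'b::topological_space) \<Rightarrow> 'i set \<Rightarrow> bool" where
  "cond_indep_vars M F xi I \<longleftrightarrow>
     (\<forall>J A. J \<subseteq> I \<longrightarrow> finite J \<longrightarrow> (\<forall>j\<in>J. A j \<in> sets borel) \<longrightarrow>
       (AE \<omega> in M. real_cond_exp M F (\<lambda>\<omega>. \<Prod>j\<in>J. indicator (A j) (xi j \<omega>)) \<omega>
                   = (\<Prod>j\<in>J. real_cond_exp M F (\<lambda>\<omega>. indicator (A j) (xi j \<omega>)) \<omega>)))"

end

theory Submission
  imports Defs
begin


lemma weighted_eq:
  fixes Z U V :: "'a \<Rightarrow> real"
  assumes [measurable]: "Z \<in> borel_measurable M" "U \<in> borel_measurable M" "V \<in> borel_measurable M"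
    and U0: "AE \<omega> in M. 0 \<le> U \<omega>" and V0: "AE \<omega> in M. 0 \<le> V \<omega>"
    and iU: "integrable M U" and iV: "integrable M V"
    and hyp: "\<And>A. A \<in> sets borel \<Longrightarrow>
       (\<integral>\<omega>. indicator A (Z \<omega>) * U \<omega> \<partial>M) = (\<integral>\<omega>. indicator A (Z \<omega>) * V \<omega> \<partial>M)"
  shows "(\<integral>\<omega>. Z \<omega> * U \<omega> \<partial>M) = (\<integral>\<omega>. Z \<omega> * V \<omega> \<partial>M)"
proof -
  have key: "emeasure (density M U) (Z -` A \<inter> space M) = emeasure (density M V) (Z -` A \<inter> space M)"
    if A[measurable]: "A \<in> sets borel" for A
  proof -
    have iUA: "integrable M (\<lambda>\<omega>. indicator A (Z \<omega>) * U \<omega>)"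
      by (rule Bochner_Integration.integrable_bound[OF iU]) (auto simp: indicator_def)
    have iVA: "integrable M (\<lambda>\<omega>. indicator A (Z \<omega>) * V \<omega>)"
      by (rule Bochner_Integration.integrable_bound[OF iV]) (auto simp: indicator_def)
    have "emeasure (density M U) (Z -` A \<inter> space M) = (\<integral>\<^sup>+ \<omega>. ennreal (indicator A (Z \<omega>) * U \<omega>) \<partial>M)"
      by (subst emeasure_density) (auto intro!: nn_integral_cong simp: indicator_def)
    also have "\<dots> = ennreal (\<integral>\<omega>. indicator A (Z \<omega>) * U \<omega> \<partial>M)"
      by (rule nn_integral_eq_integral[OF iUA]) (use U0 in auto)
    also have "\<dots> = ennreal (\<integral>\<omega>. indicator A (Z \<omega>) * V \<omega> \<partial>M)" using hyp[OF A] by simp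
    also have "\<dots> = (\<integral>\<^sup>+ \<omega>. ennreal (indicator A (Z \<omega>) * V \<omega>) \<partial>M)"
      by (rule nn_integral_eq_integral[OF iVA, symmetric]) (use V0 in auto)
    also have "\<dots> = emeasure (density M V) (Z -` A \<inter> space M)"
      by (subst emeasure_density) (auto intro!: nn_integral_cong simp: indicator_def)
    finally show ?thesis .
  qed
  have eq: "distr (density M U) borel Z = distr (density M V) borel Z"
    by (rule measure_eqI) (auto simp: emeasure_distr key)
  have "(\<integral>\<omega>. Z \<omega> * U \<omega> \<partial>M) = integral\<^sup>L (distr (density M U) borel Z) (\<lambda>t. t)"
    by (subst integral_distr) (auto simp: integral_density U0 mult.commute)
  also have "\<dots> = integral\<^sup>L (distr (density M V) borel Z) (\<lambda>t. t)" using eq by simp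
  also have "\<dots> = (\<integral>\<omega>. Z \<omega> * V \<omega> \<partial>M)"
    by (subst integral_distr) (auto simp: integral_density V0 mult.commute)
  finally show ?thesis .
qed

lemma gen_sigma_sub:
  assumes "prob_space M" and meas: "\<And>X. X \<in> Xs \<Longrightarrow> X \<in> borel_measurable M"
  shows "finite_measure_subalgebra M (gen_sigma M Xs)"
proof -
  interpret prob_space M by fact
  have gen: "{X -` A \<inter> space M | X A. X \<in> Xs \<and> A \<in> sets (borel :: 'b measure)} \<subseteq> sets M"
    using meas by auto
  have sp: "space (gen_sigma M Xs) = space M"
    unfolding gen_sigma_def by (rule space_measure_of) auto
  have "sets (gen_sigma M Xs) \<subseteq> sets M"
    unfolding gen_sigma_def using gen
    by (subst sets_measure_of) (use sets.sigma_sets_subset[OF gen] in auto)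
  then show ?thesis
    unfolding finite_measure_subalgebra_def finite_measure_subalgebra_axioms_def subalgebra_def
    using sp finite_measure_axioms by auto
qed

lemma gen_sigma_meas:
  assumes "X \<in> Xs"
  shows "X \<in> borel_measurable (gen_sigma M Xs)"
proof (rule measurableI)
  fix A :: "'b set" assume "A \<in> sets borel"
  then have "X -` A \<inter> space M \<in> sigma_sets (space M) {X -` A \<inter> space M | X A. X \<in> Xs \<and> A \<in> sets (borel::'b measure)}"
    using assms by (intro sigma_sets.Basic) auto
  moreover have "space (gen_sigma M Xs) = space M"
    unfolding gen_sigma_def by (rule space_measure_of) auto
  ultimately show "X -` A \<inter> space (gen_sigma M Xs) \<in> sets (gen_sigma M Xs)"
    unfolding gen_sigma_def by (subst sets_measure_of) auto
qed auto

lemma grad_meas: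
  fixes f :: "'v::euclidean_space \<Rightarrow> real"
  assumes grad: "\<And>y. GDERIV f y :> gradf y"
  shows "gradf \<in> borel_measurable borel"
proof -
  have cont: "continuous_on UNIV f"
    using grad unfolding gderiv_def
    by (intro has_derivative_continuous_on) (auto intro: has_derivative_at_withinI)
  have fm[measurable]: "f \<in> borel_measurable borel" by (rule borel_measurable_continuous_onI[OF cont])
  show ?thesis
  proof (subst borel_measurable_euclidean_space, intro ballI)
    fix b :: 'v assume b: "b \<in> Basis"
    show "(\<lambda>y. gradf y \<bullet> b) \<in> borel_measurable borel"
    proof (rule borel_measurable_LIMSEQ_real)
      fix y :: 'v
      have d1: "((\<lambda>t. y + t *\<^sub>R b) has_derivative (\<lambda>t. t *\<^sub>R b)) (at (0::real))"
        by (auto intro!: derivative_eq_intros)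
      have d2: "(f has_derivative (\<lambda>h. h \<bullet> gradf y)) (at (y + 0 *\<^sub>R b))"
        using grad[of y] unfolding gderiv_def by simp
      have d: "((\<lambda>t. f (y + t *\<^sub>R b)) has_derivative (\<lambda>t. (t *\<^sub>R b) \<bullet> gradf y)) (at 0)"
        using has_derivative_compose[OF d1 d2] .
      then have "((\<lambda>t. f (y + t *\<^sub>R b)) has_field_derivative (gradf y \<bullet> b)) (at 0)"
        unfolding has_field_derivative_def
        proof -
          have "(\<lambda>t. (t *\<^sub>R b) \<bullet> gradf y) = (\<lambda>t. (gradf y \<bullet> b) * t)"
            by (auto simp: fun_eq_iff inner_commute)
          then show "((\<lambda>t. f (y + t *\<^sub>R b)) has_derivative (*) (gradf y \<bullet> b)) (at 0)"
            using d by simp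
        qed
      then have lim: "((\<lambda>t. (f (y + t *\<^sub>R b) - f y) / t) \<longlongrightarrow> gradf y \<bullet> b) (at 0)"
        unfolding has_field_derivative_iff by simp
      have s: "filterlim (\<lambda>k::nat. 1 / real (Suc k)) (at 0) sequentially"
        using LIMSEQ_inverse_real_of_nat by (auto simp: filterlim_at inverse_eq_divide)
      show "(\<lambda>k. (f (y + (1 / real (Suc k)) *\<^sub>R b) - f y) / (1 / real (Suc k))) \<longlonglongrightarrow> gradf y \<bullet> b"
        using filterlim_compose[OF lim s] by simp
    qed measurable
  qed
qed



lemma maxbnd: "\<bar>y * max 0 t\<bar> \<le> \<bar>t * y\<bar>" "\<bar>y * max 0 (-t)\<bar> \<le> \<bar>t * (y::real)\<bar>"
proof -
  show "\<bar>y * max 0 t\<bar> \<le> \<bar>t * y\<bar>"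
  proof (cases "t \<ge> 0")
    case True then have "max 0 t = t" by simp
    then show ?thesis by (simp add: mult.commute)
  next
    case False then have "max 0 t = 0" by simp
    then show ?thesis by simp
  qed
  show "\<bar>y * max 0 (-t)\<bar> \<le> \<bar>t * (y::real)\<bar>"
  proof (cases "t \<ge> 0")
    case False then have "max 0 (-t) = -t" by simp
    then show ?thesis by (simp add: abs_mult)
  next
    case True then have "max 0 (-t) = 0" by simp
    then show ?thesis by simp
  qed
qed

lemma cross_zero:
  fixes X Y :: "'a \<Rightarrow> real"
  assumes P: "prob_space M" and S: "sigma_finite_subalgebra M F"
    and [measurable]: "X \<in> borel_measurable M" "Y \<in> borel_measurable M"
    and iX: "integrable M X" and iXY: "integrable M (\<lambda>\<omega>. X \<omega> * Y \<omega>)"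
    and EX0: "AE \<omega> in M. real_cond_exp M F X \<omega> = 0"
    and ci: "\<And>A B. A \<in> sets borel \<Longrightarrow> B \<in> sets borel \<Longrightarrow>
      AE \<omega> in M. real_cond_exp M F (\<lambda>\<omega>. indicator A (X \<omega>) * indicator B (Y \<omega>)) \<omega>
        = real_cond_exp M F (\<lambda>\<omega>. indicator A (X \<omega>)) \<omega> * real_cond_exp M F (\<lambda>\<omega>. indicator B (Y \<omega>)) \<omega>"
  shows "(\<integral>\<omega>. X \<omega> * Y \<omega> \<partial>M) = 0"
proof -
  interpret prob_space M by fact
  interpret sigma_finite_subalgebra M F by fact
  have i1: "integrable M (\<lambda>_. 1::real)" by simp
  have indint: "integrable M (\<lambda>\<omega>. indicator A (Z \<omega>) :: real)"
    if [measurable]: "A \<in> sets borel" "Z \<in> borel_measurable M" for A and Z :: "'a \<Rightarrow> real"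
    by (rule Bochner_Integration.integrable_bound[OF i1]) (auto simp: indicator_def)
  have step1: "(\<integral>\<omega>. X \<omega> * indicator B (Y \<omega>) \<partial>M) = 0" if B[measurable]: "B \<in> sets borel" for B
  proof -
    define p where "p = real_cond_exp M F (\<lambda>\<omega>. indicator B (Y \<omega>))"
    have pF[measurable]: "p \<in> borel_measurable F" "p \<in> borel_measurable M" unfolding p_def by auto
    have p0: "AE \<omega> in M. 0 \<le> p \<omega>" unfolding p_def
      by (rule real_cond_exp_pos) auto
    have p1: "AE \<omega> in M. p \<omega> \<le> 1" unfolding p_def
      by (rule real_cond_exp_le_c[OF indint[OF B \<open>Y \<in> borel_measurable M\<close>]]) (auto simp: indicator_def)
    have ip: "integrable M p" unfolding p_def by (intro real_cond_exp_int indint) auto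
    have hyp: "(\<integral>\<omega>. indicator A (X \<omega>) * indicator B (Y \<omega>) \<partial>M) = (\<integral>\<omega>. indicator A (X \<omega>) * p \<omega> \<partial>M)"
      if A[measurable]: "A \<in> sets borel" for A
    proof -
      have iAB: "integrable M (\<lambda>\<omega>. indicator A (X \<omega>) * indicator B (Y \<omega>) :: real)"
        by (rule Bochner_Integration.integrable_bound[OF i1]) (auto simp: indicator_def)
      have ipA: "integrable M (\<lambda>\<omega>. p \<omega> * indicator A (X \<omega>))"
        by (rule Bochner_Integration.integrable_bound[OF i1]) (use p0 p1 in \<open>auto simp: indicator_def\<close>)
      have "(\<integral>\<omega>. indicator A (X \<omega>) * indicator B (Y \<omega>) \<partial>M)
          = (\<integral>\<omega>. real_cond_exp M F (\<lambda>\<omega>. indicator A (X \<omega>) * indicator B (Y \<omega>)) \<omega> \<partial>M)"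
        by (rule real_cond_exp_int(2)[OF iAB, symmetric])
      also have "\<dots> = (\<integral>\<omega>. p \<omega> * real_cond_exp M F (\<lambda>\<omega>. indicator A (X \<omega>)) \<omega> \<partial>M)"
        by (rule integral_cong_AE) (use ci[OF A B] in \<open>auto simp: p_def\<close>)
      also have "\<dots> = (\<integral>\<omega>. p \<omega> * indicator A (X \<omega>) \<partial>M)"
        by (rule real_cond_exp_intg(2)[OF ipA]) auto
      finally show ?thesis by (simp add: mult.commute)
    qed
    have "(\<integral>\<omega>. X \<omega> * indicator B (Y \<omega>) \<partial>M) = (\<integral>\<omega>. X \<omega> * p \<omega> \<partial>M)"
      by (rule weighted_eq[OF _ _ _ _ p0 indint ip hyp]) (auto simp: indicator_def)
    also have "\<dots> = (\<integral>\<omega>. p \<omega> * real_cond_exp M F X \<omega> \<partial>M)"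
    proof -
      have "integrable M (\<lambda>\<omega>. p \<omega> * X \<omega>)"
        by (rule Bochner_Integration.integrable_bound[OF iX]) (use p0 p1 in \<open>auto simp: abs_mult intro!: mult_left_le_one_le\<close>)
      then show ?thesis using real_cond_exp_intg(2)[of p X] by (simp add: mult.commute)
    qed
    also have "\<dots> = 0"
      by (subst integral_cong_AE[where g = "\<lambda>_. 0"]) (use EX0 in auto)
    finally show ?thesis .
  qed
  have iXp: "integrable M (\<lambda>\<omega>. max 0 (X \<omega>))" "integrable M (\<lambda>\<omega>. max 0 (- X \<omega>))"
    by (rule Bochner_Integration.integrable_bound[OF iX]; auto)+
  have "(\<integral>\<omega>. Y \<omega> * max 0 (X \<omega>) \<partial>M) = (\<integral>\<omega>. Y \<omega> * max 0 (- X \<omega>) \<partial>M)"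
  proof (rule weighted_eq[OF _ _ _ _ _ iXp])
    fix B :: "real set" assume B[measurable]: "B \<in> sets borel"
    have a: "integrable M (\<lambda>\<omega>. indicator B (Y \<omega>) * max 0 (X \<omega>))"
      by (rule Bochner_Integration.integrable_bound[OF iX]) (auto simp: indicator_def)
    have b: "integrable M (\<lambda>\<omega>. indicator B (Y \<omega>) * max 0 (- X \<omega>))"
      by (rule Bochner_Integration.integrable_bound[OF iX]) (auto simp: indicator_def)
    have "(\<integral>\<omega>. indicator B (Y \<omega>) * max 0 (X \<omega>) \<partial>M) - (\<integral>\<omega>. indicator B (Y \<omega>) * max 0 (- X \<omega>) \<partial>M)
       = (\<integral>\<omega>. X \<omega> * indicator B (Y \<omega>) \<partial>M)"
      by (subst Bochner_Integration.integral_diff[OF a b, symmetric]) (auto intro!: Bochner_Integration.integral_cong simp: indicator_def)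
    then show "(\<integral>\<omega>. indicator B (Y \<omega>) * max 0 (X \<omega>) \<partial>M) = (\<integral>\<omega>. indicator B (Y \<omega>) * max 0 (- X \<omega>) \<partial>M)"
      using step1[OF B] by simp
  qed auto
  moreover have c: "integrable M (\<lambda>\<omega>. Y \<omega> * max 0 (X \<omega>))"
    by (rule Bochner_Integration.integrable_bound[OF iXY]) (auto simp: maxbnd simp del: abs_mult)
  moreover have d: "integrable M (\<lambda>\<omega>. Y \<omega> * max 0 (- X \<omega>))"
    by (rule Bochner_Integration.integrable_bound[OF iXY]) (auto simp: maxbnd simp del: abs_mult)
  moreover have "(\<integral>\<omega>. X \<omega> * Y \<omega> \<partial>M) = (\<integral>\<omega>. Y \<omega> * max 0 (X \<omega>) \<partial>M) - (\<integral>\<omega>. Y \<omega> * max 0 (- X \<omega>) \<partial>M)"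
    by (subst Bochner_Integration.integral_diff[OF c d, symmetric]) (auto intro!: Bochner_Integration.integral_cong simp: max_def)
  ultimately show ?thesis by simp
qed



lemma two_prod_le: "2 * (a::real) * b \<le> a^2 + b^2"
proof -
  have "0 \<le> (a - b)^2" by simp
  moreover have "(a - b)^2 = a^2 - 2*a*b + b^2" by (simp add: power2_diff)
  ultimately show ?thesis by linarith
qed

lemma nn_prod_le: "(a::real) * b \<le> a^2 + b^2"
proof (cases "a * b \<le> 0")
  case True then show ?thesis using zero_le_power2[of a] zero_le_power2[of b] by linarith
next
  case False then show ?thesis using two_prod_le[of a b] by linarith
qed

lemma inner_bnd: "\<bar>u \<bullet> v\<bar> \<le> norm u ^2 + norm (v::'v::real_inner) ^2"
  using Cauchy_Schwarz_ineq2[of u v] nn_prod_le[of "norm u" "norm v"] by linarith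

lemma comp_bnd:
  assumes "b \<in> Basis" shows "\<bar>u \<bullet> b\<bar> \<le> 1 + norm (u::'v::euclidean_space) ^2"
proof -
  have "\<bar>u \<bullet> b\<bar> \<le> norm u" using Basis_le_norm[OF assms] by simp
  moreover have "norm u \<le> 1 + norm u ^2"
  proof (cases "norm u \<le> 1")
    case False then have "norm u * 1 \<le> norm u * norm u" by (intro mult_left_mono) auto
    then show ?thesis by (simp add: power2_eq_square)
  qed (simp add: add_increasing2)
  ultimately show ?thesis by linarith
qed

lemma compprod_bnd:
  assumes "b \<in> Basis" shows "\<bar>(u \<bullet> b) * (v \<bullet> b)\<bar> \<le> norm (u::'v::euclidean_space) ^2 + norm v ^2"
proof -
  have "\<bar>(u \<bullet> b) * (v \<bullet> b)\<bar> \<le> norm u * norm v"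
    unfolding abs_mult using Basis_le_norm[OF assms, of u] Basis_le_norm[OF assms, of v]
    by (intro mult_mono) (auto simp: inner_commute)
  then show ?thesis using nn_prod_le[of "norm u" "norm v"] by linarith
qed

lemma norm_diff_sq: "norm (u - v) ^2 \<le> 2 * norm u ^2 + 2 * norm (v::'v::real_normed_vector) ^2"
proof -
  have "norm (u - v) \<le> norm u + norm v" by (rule norm_triangle_ineq4)
  then have "norm (u - v) ^2 \<le> (norm u + norm v) ^2" by (intro power_mono) auto
  also have "\<dots> \<le> 2 * norm u ^2 + 2 * norm v ^2"
    using two_prod_le[of "norm u" "norm v"] by (simp add: power2_sum)
  finally show ?thesis .
qed

lemma int_comp:
  fixes u :: "'a \<Rightarrow> 'v::euclidean_space"
  assumes "finite_measure M" and [measurable]: "u \<in> borel_measurable M"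
    and iu: "integrable M (\<lambda>\<omega>. norm (u \<omega>)^2)" and b: "b \<in> Basis"
  shows "integrable M (\<lambda>\<omega>. u \<omega> \<bullet> b)"
proof (rule Bochner_Integration.integrable_bound)
  show "integrable M (\<lambda>\<omega>. 1 + norm (u \<omega>)^2)"
    using assms(1) iu by (intro Bochner_Integration.integrable_add finite_measure.integrable_const) auto
  show "AE \<omega> in M. norm (u \<omega> \<bullet> b) \<le> norm (1 + norm (u \<omega>)^2)"
    using comp_bnd[OF b] by (auto intro!: AE_I2 simp: add_nonneg_nonneg)
qed measurable

lemma int_compprod:
  fixes u v :: "'a \<Rightarrow> 'v::euclidean_space"
  assumes [measurable]: "u \<in> borel_measurable M" "v \<in> borel_measurable M"
    and iu: "integrable M (\<lambda>\<omega>. norm (u \<omega>)^2)" and iv: "integrable M (\<lambda>\<omega>. norm (v \<omega>)^2)" and b: "b \<in> Basis"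
  shows "integrable M (\<lambda>\<omega>. (u \<omega> \<bullet> b) * (v \<omega> \<bullet> b))"
proof (rule Bochner_Integration.integrable_bound)
  show "integrable M (\<lambda>\<omega>. norm (u \<omega>)^2 + norm (v \<omega>)^2)"
    using iu iv by (intro Bochner_Integration.integrable_add) auto
  show "AE \<omega> in M. norm ((u \<omega> \<bullet> b) * (v \<omega> \<bullet> b)) \<le> norm (norm (u \<omega>)^2 + norm (v \<omega>)^2)"
    using compprod_bnd[OF b] by (auto intro!: AE_I2 simp del: abs_mult)
qed measurable

lemma int_inner:
  fixes u v :: "'a \<Rightarrow> 'v::euclidean_space"
  assumes [measurable]: "u \<in> borel_measurable M" "v \<in> borel_measurable M"
    and iu: "integrable M (\<lambda>\<omega>. norm (u \<omega>)^2)" and iv: "integrable M (\<lambda>\<omega>. norm (v \<omega>)^2)"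
  shows "integrable M (\<lambda>\<omega>. u \<omega> \<bullet> v \<omega>)"
proof (rule Bochner_Integration.integrable_bound)
  show "integrable M (\<lambda>\<omega>. norm (u \<omega>)^2 + norm (v \<omega>)^2)"
    using iu iv by (intro Bochner_Integration.integrable_add) auto
  show "AE \<omega> in M. norm (u \<omega> \<bullet> v \<omega>) \<le> norm (norm (u \<omega>)^2 + norm (v \<omega>)^2)"
    using inner_bnd by (auto intro!: AE_I2)
qed measurable

lemma int_diff_sq:
  fixes u v :: "'a \<Rightarrow> 'v::euclidean_space"
  assumes [measurable]: "u \<in> borel_measurable M" "v \<in> borel_measurable M"
    and iu: "integrable M (\<lambda>\<omega>. norm (u \<omega>)^2)" and iv: "integrable M (\<lambda>\<omega>. norm (v \<omega>)^2)"
  shows "integrable M (\<lambda>\<omega>. norm (u \<omega> - v \<omega>)^2)"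
proof (rule Bochner_Integration.integrable_bound)
  show "integrable M (\<lambda>\<omega>. 2 * norm (u \<omega>)^2 + 2 * norm (v \<omega>)^2)"
    using iu iv by (intro Bochner_Integration.integrable_add Bochner_Integration.integrable_mult_right) auto
  show "AE \<omega> in M. norm (norm (u \<omega> - v \<omega>)^2) \<le> norm (2 * norm (u \<omega>)^2 + 2 * norm (v \<omega>)^2)"
    using norm_diff_sq by (auto intro!: AE_I2)
qed measurable

lemma f_cont:
  fixes f :: "'v::euclidean_space \<Rightarrow> real"
  assumes grad: "\<And>y. GDERIV f y :> gradf y"
  shows "continuous_on UNIV f"
  using grad unfolding gderiv_def
  by (intro has_derivative_continuous_on) (auto intro: has_derivative_at_withinI)

lemma simplex_bdd:
  fixes f :: "'v::euclidean_space \<Rightarrow> real"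
  assumes cont: "continuous_on UNIV f"
  shows "bdd_below ((\<lambda>v. f (z - \<gamma> *\<^sub>R (\<Sum>i=1..n. v i *\<^sub>R h i))) ` unit_simplex n)"
proof -
  define K where "K = convex hull (h ` {1..n})"
  have cK: "compact K" unfolding K_def by (intro compact_convex_hull finite_imp_compact) auto
  have cphi: "continuous_on K (\<lambda>y. f (z - \<gamma> *\<^sub>R y))"
    by (rule continuous_on_compose2[OF cont]) (auto intro!: continuous_intros)
  have "bdd_below ((\<lambda>y. f (z - \<gamma> *\<^sub>R y)) ` K)"
    by (intro bounded_imp_bdd_below compact_imp_bounded compact_continuous_image cphi cK)
  moreover have "(\<lambda>v. f (z - \<gamma> *\<^sub>R (\<Sum>i=1..n. v i *\<^sub>R h i))) ` unit_simplex n \<subseteq> (\<lambda>y. f (z - \<gamma> *\<^sub>R y)) ` K"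
  proof (intro image_subsetI imageI)
    fix v assume "v \<in> unit_simplex n"
    then have v: "\<forall>i\<in>{1..n}. 0 \<le> v i" "(\<Sum>i=1..n. v i) = 1" unfolding unit_simplex_def by auto
    show "(\<Sum>i=1..n. v i *\<^sub>R h i) \<in> K"
      unfolding K_def by (rule convex_sum[OF _ convex_convex_hull]) (use v in \<open>auto intro: hull_inc\<close>)
  qed
  ultimately show ?thesis by (rule bdd_below_mono)
qed



theorem mainTheorem2:
  fixes M :: "'a measure"
    and f :: "'v::euclidean_space \<Rightarrow> real" and gradf :: "'v \<Rightarrow> 'v"
    and n :: nat and Gs :: "nat set"
    and x x' :: "'a \<Rightarrow> 'v" and g :: "nat \<Rightarrow> 'a \<Rightarrow> 'v" and w :: "nat \<Rightarrow> 'a \<Rightarrow> real"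
    and \<gamma> L \<sigma> \<delta> :: real
  assumes prob: "prob_space M"
    and gamma_pos: "\<gamma> > 0" and delta_nonneg: "\<delta> \<ge> 0"
    and gamma_le: "\<gamma> \<le> 1 / (2 * L)"
    and Gs_sub: "Gs \<subseteq> {1..n}" and Gs_ne: "Gs \<noteq> {}"
    (* measurability of the iterate and the vectors sent by the clients *)
    and x_meas: "x \<in> borel_measurable M"
    and g_meas: "\<And>i. i \<in> {1..n} \<Longrightarrow> g i \<in> borel_measurable M"
    (* the MeritFed update with weights in the unit_simplex *)
    and w_simplex: "\<And>\<omega>. \<omega> \<in> space M \<Longrightarrow> (\<lambda>i. w i \<omega>) \<in> unit_simplex n"
    and update: "\<And>\<omega>. \<omega> \<in> space M \<Longrightarrow>
                   x' \<omega> = x \<omega> - \<gamma> *\<^sub>R (\<Sum>i=1..n. w i \<omega> *\<^sub>R g i \<omega>)"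
    (* gradient of f *)
    and grad: "\<And>y. GDERIV f y :> gradf y"
    (* Assumption 1 *)
    and unbiased: "\<And>i b. i \<in> Gs \<Longrightarrow> b \<in> Basis \<Longrightarrow>
          AE \<omega> in M. real_cond_exp M (gen_sigma M {x}) (\<lambda>\<omega>. g i \<omega> \<bullet> b) \<omega> = gradf (x \<omega>) \<bullet> b"
    and variance: "\<And>i. i \<in> Gs \<Longrightarrow>
          AE \<omega> in M. real_cond_exp M (gen_sigma M {x}) (\<lambda>\<omega>. (norm (g i \<omega> - gradf (x \<omega>)))\<^sup>2) \<omega> \<le> \<sigma>\<^sup>2"
    and indep: "cond_indep_vars M (gen_sigma M {x}) (\<lambda>i \<omega>. g i \<omega> - gradf (x \<omega>)) Gs"
    (* Assumption 2: L-smoothness *)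
    and smooth: "\<And>u y. f u \<le> f y + gradf y \<bullet> (u - y) + L / 2 * (norm (u - y))\<^sup>2"
    (* Assumption 3: the server solves the weight subproblem up to accuracy delta *)
    and subproblem: "AE \<omega> in M.
          real_cond_exp M (gen_sigma M (insert x (g ` {1..n}))) (\<lambda>\<omega>. f (x' \<omega>)) \<omega>
          - Inf ((\<lambda>v. f (x \<omega> - \<gamma> *\<^sub>R (\<Sum>i=1..n. v i *\<^sub>R g i \<omega>))) ` unit_simplex n) \<le> \<delta>"
    (* the expectations appearing in the claim exist *)
    and int_fx: "integrable M (\<lambda>\<omega>. f (x \<omega>))"
    and int_fx': "integrable M (\<lambda>\<omega>. f (x' \<omega>))"
    and int_grad: "integrable M (\<lambda>\<omega>. (norm (gradf (x \<omega>)))\<^sup>2)"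
    and int_g: "\<And>i. i \<in> Gs \<Longrightarrow> integrable M (\<lambda>\<omega>. (norm (g i \<omega>))\<^sup>2)"
  shows "(\<integral>\<omega>. f (x' \<omega>) \<partial>M)
           \<le> (\<integral>\<omega>. f (x \<omega>) \<partial>M) - \<gamma> / 2 * (\<integral>\<omega>. (norm (gradf (x \<omega>)))\<^sup>2 \<partial>M)
              + \<gamma>\<^sup>2 * L * \<sigma>\<^sup>2 / real (card Gs) + \<delta>"
proof -
  interpret prob_space M by (rule prob)
  have Lpos: "L > 0"
  proof (rule ccontr)
    assume "\<not> L > 0"
    then have "1 / (2 * L) \<le> 0" by (intro divide_nonneg_nonpos) auto
    then show False using gamma_le gamma_pos by linarith
  qed
  have finG: "finite Gs" using Gs_sub finite_subset by blast
  define G where "G = real (card Gs)"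
  have Gpos: "G > 0" unfolding G_def using finG Gs_ne by (simp add: card_gt_0_iff)
  define F where "F = gen_sigma M {x}"
  have SF: "sigma_finite_subalgebra M F"
    unfolding F_def by (rule finite_measure_subalgebra_is_sigma_finite[OF gen_sigma_sub[OF prob]]) (use x_meas in auto)
  have xF: "x \<in> borel_measurable F" unfolding F_def by (rule gen_sigma_meas) simp
  have gm[measurable]: "gradf \<in> borel_measurable borel" by (rule grad_meas[OF grad])
  have xM[measurable]: "x \<in> borel_measurable M" by (rule x_meas)
  define a where "a = (\<lambda>\<omega>. gradf (x \<omega>))"
  have aF[measurable]: "a \<in> borel_measurable F" unfolding a_def using measurable_comp[OF xF gm] by (simp add: comp_def)
  have aM[measurable]: "a \<in> borel_measurable M" unfolding a_def by measurable
  define \<xi> where "\<xi> = (\<lambda>i \<omega>. g i \<omega> - a \<omega>)"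
  have gM: "g i \<in> borel_measurable M" if "i \<in> Gs" for i using g_meas Gs_sub that by auto
  have \<xi>M: "\<xi> i \<in> borel_measurable M" if "i \<in> Gs" for i
    using gM[OF that] unfolding \<xi>_def by measurable
  have ia2: "integrable M (\<lambda>\<omega>. norm (a \<omega>)^2)" using int_grad unfolding a_def .
  have i\<xi>2: "integrable M (\<lambda>\<omega>. norm (\<xi> i \<omega>)^2)" if "i \<in> Gs" for i
    unfolding \<xi>_def by (rule int_diff_sq[OF gM[OF that] aM int_g[OF that] ia2])
  have fm: "finite_measure M" by (rule finite_measure_axioms)
  have cont: "continuous_on UNIV f" by (rule f_cont[OF grad])
  have fM[measurable]: "f \<in> borel_measurable borel" by (rule borel_measurable_continuous_onI[OF cont])

  have K1: "AE \<omega> in M. real_cond_exp M F (\<lambda>\<omega>. \<xi> i \<omega> \<bullet> b) \<omega> = 0" if i: "i \<in> Gs" and b: "b \<in> Basis" for i b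
  proof -
    note [measurable] = gM[OF i]
    have igb: "integrable M (\<lambda>\<omega>. g i \<omega> \<bullet> b)" by (rule int_comp[OF fm gM[OF i] int_g[OF i] b])
    have iab: "integrable M (\<lambda>\<omega>. a \<omega> \<bullet> b)" by (rule int_comp[OF fm aM ia2 b])
    have e1: "AE \<omega> in M. real_cond_exp M F (\<lambda>\<omega>. g i \<omega> \<bullet> b - a \<omega> \<bullet> b) \<omega>
        = real_cond_exp M F (\<lambda>\<omega>. g i \<omega> \<bullet> b) \<omega> - real_cond_exp M F (\<lambda>\<omega>. a \<omega> \<bullet> b) \<omega>"
      by (rule sigma_finite_subalgebra.real_cond_exp_diff[OF SF igb iab])
    have e2: "AE \<omega> in M. real_cond_exp M F (\<lambda>\<omega>. a \<omega> \<bullet> b) \<omega> = a \<omega> \<bullet> b"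
      by (rule sigma_finite_subalgebra.real_cond_exp_F_meas[OF SF iab]) measurable
    have e3: "AE \<omega> in M. real_cond_exp M F (\<lambda>\<omega>. g i \<omega> \<bullet> b) \<omega> = a \<omega> \<bullet> b"
      using unbiased[OF i b] unfolding F_def a_def .
    have "(\<lambda>\<omega>. \<xi> i \<omega> \<bullet> b) = (\<lambda>\<omega>. g i \<omega> \<bullet> b - a \<omega> \<bullet> b)"
      unfolding \<xi>_def by (simp add: fun_eq_iff inner_diff_left)
    then show ?thesis using e1 e2 e3 by auto
  qed

  have K2: "(\<integral>\<omega>. a \<omega> \<bullet> \<xi> i \<omega> \<partial>M) = 0" if i: "i \<in> Gs" for i
  proof -
    note [measurable] = \<xi>M[OF i]
    have each: "(\<integral>\<omega>. (a \<omega> \<bullet> b) * (\<xi> i \<omega> \<bullet> b) \<partial>M) = 0" if b: "b \<in> Basis" for b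
    proof -
      have ip: "integrable M (\<lambda>\<omega>. (a \<omega> \<bullet> b) * (\<xi> i \<omega> \<bullet> b))"
        by (rule int_compprod[OF aM \<xi>M[OF i] ia2 i\<xi>2[OF i] b])
      have "(\<integral>\<omega>. (a \<omega> \<bullet> b) * (\<xi> i \<omega> \<bullet> b) \<partial>M)
          = (\<integral>\<omega>. (a \<omega> \<bullet> b) * real_cond_exp M F (\<lambda>\<omega>. \<xi> i \<omega> \<bullet> b) \<omega> \<partial>M)"
        by (rule sigma_finite_subalgebra.real_cond_exp_intg(2)[OF SF ip, symmetric]) measurable
      also have "\<dots> = (\<integral>\<omega>. 0 \<partial>M)"
        by (rule integral_cong_AE) (use K1[OF i b] in auto)
      finally show ?thesis by simp
    qed
    have "(\<integral>\<omega>. a \<omega> \<bullet> \<xi> i \<omega> \<partial>M) = (\<integral>\<omega>. (\<Sum>b\<in>Basis. (a \<omega> \<bullet> b) * (\<xi> i \<omega> \<bullet> b)) \<partial>M)"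
      by (intro Bochner_Integration.integral_cong refl euclidean_inner)
    also have "\<dots> = (\<Sum>b\<in>Basis. (\<integral>\<omega>. (a \<omega> \<bullet> b) * (\<xi> i \<omega> \<bullet> b) \<partial>M))"
      by (subst Bochner_Integration.integral_sum) (auto intro: int_compprod[OF aM \<xi>M[OF i] ia2 i\<xi>2[OF i]])
    also have "\<dots> = 0" using each by simp
    finally show ?thesis .
  qed

  have K3: "(\<integral>\<omega>. norm (\<xi> i \<omega>)^2 \<partial>M) \<le> \<sigma>^2" if i: "i \<in> Gs" for i
  proof -
    have "(\<integral>\<omega>. norm (\<xi> i \<omega>)^2 \<partial>M) = (\<integral>\<omega>. real_cond_exp M F (\<lambda>\<omega>. norm (\<xi> i \<omega>)^2) \<omega> \<partial>M)"
      by (rule sigma_finite_subalgebra.real_cond_exp_int(2)[OF SF i\<xi>2[OF i], symmetric])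
    also have "\<dots> \<le> (\<integral>\<omega>. \<sigma>^2 \<partial>M)"
    proof (rule integral_mono_AE)
      show "integrable M (real_cond_exp M F (\<lambda>\<omega>. norm (\<xi> i \<omega>)^2))"
        by (rule sigma_finite_subalgebra.real_cond_exp_int(1)[OF SF i\<xi>2[OF i]])
      show "AE \<omega> in M. real_cond_exp M F (\<lambda>\<omega>. norm (\<xi> i \<omega>)^2) \<omega> \<le> \<sigma>^2"
        using variance[OF i] unfolding F_def \<xi>_def a_def .
    qed auto
    also have "\<dots> = \<sigma>^2" by (simp add: prob_space)
    finally show ?thesis .
  qed

  have K4: "(\<integral>\<omega>. \<xi> i \<omega> \<bullet> \<xi> j \<omega> \<partial>M) = 0" if i: "i \<in> Gs" and j: "j \<in> Gs" and ij: "i \<noteq> j" for i j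
  proof -
    note [measurable] = \<xi>M[OF i] \<xi>M[OF j]
    have each: "(\<integral>\<omega>. (\<xi> i \<omega> \<bullet> b) * (\<xi> j \<omega> \<bullet> b) \<partial>M) = 0" if b: "b \<in> Basis" for b
    proof (rule cross_zero[OF prob SF])
      show "integrable M (\<lambda>\<omega>. \<xi> i \<omega> \<bullet> b)" by (rule int_comp[OF fm \<xi>M[OF i] i\<xi>2[OF i] b])
      show "integrable M (\<lambda>\<omega>. (\<xi> i \<omega> \<bullet> b) * (\<xi> j \<omega> \<bullet> b))"
        by (rule int_compprod[OF \<xi>M[OF i] \<xi>M[OF j] i\<xi>2[OF i] i\<xi>2[OF j] b])
      show "AE \<omega> in M. real_cond_exp M F (\<lambda>\<omega>. \<xi> i \<omega> \<bullet> b) \<omega> = 0" by (rule K1[OF i b])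
      fix A B :: "real set" assume A: "A \<in> sets borel" and B: "B \<in> sets borel"
      define S where "S = (\<lambda>k. if k = i then (\<lambda>v::'v. v \<bullet> b) -` A else (\<lambda>v::'v. v \<bullet> b) -` B)"
      have Sb: "\<forall>k\<in>{i,j}. S k \<in> sets borel"
        unfolding S_def using A B by (auto intro!: measurable_sets_borel[of "\<lambda>v::'v. v \<bullet> b"])
      have "AE \<omega> in M. real_cond_exp M F (\<lambda>\<omega>. \<Prod>k\<in>{i,j}. indicator (S k) (\<xi> k \<omega>)) \<omega>
               = (\<Prod>k\<in>{i,j}. real_cond_exp M F (\<lambda>\<omega>. indicator (S k) (\<xi> k \<omega>)) \<omega>)"
        using indep Sb i j unfolding cond_indep_vars_def F_def \<xi>_def a_def by auto
      moreover have "(\<lambda>\<omega>. \<Prod>k\<in>{i,j}. indicator (S k) (\<xi> k \<omega>) :: real)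
          = (\<lambda>\<omega>. indicator A (\<xi> i \<omega> \<bullet> b) * indicator B (\<xi> j \<omega> \<bullet> b))"
        using ij by (auto simp: S_def fun_eq_iff indicator_def)
      moreover have "(\<lambda>\<omega>. indicator (S i) (\<xi> i \<omega>) :: real) = (\<lambda>\<omega>. indicator A (\<xi> i \<omega> \<bullet> b))"
        by (auto simp: S_def fun_eq_iff indicator_def)
      moreover have "(\<lambda>\<omega>. indicator (S j) (\<xi> j \<omega>) :: real) = (\<lambda>\<omega>. indicator B (\<xi> j \<omega> \<bullet> b))"
        using ij by (auto simp: S_def fun_eq_iff indicator_def)
      ultimately show "AE \<omega> in M. real_cond_exp M F (\<lambda>\<omega>. indicator A (\<xi> i \<omega> \<bullet> b) * indicator B (\<xi> j \<omega> \<bullet> b)) \<omega>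
        = real_cond_exp M F (\<lambda>\<omega>. indicator A (\<xi> i \<omega> \<bullet> b)) \<omega> * real_cond_exp M F (\<lambda>\<omega>. indicator B (\<xi> j \<omega> \<bullet> b)) \<omega>"
        using ij by simp
    qed measurable
    have "(\<integral>\<omega>. \<xi> i \<omega> \<bullet> \<xi> j \<omega> \<partial>M) = (\<integral>\<omega>. (\<Sum>b\<in>Basis. (\<xi> i \<omega> \<bullet> b) * (\<xi> j \<omega> \<bullet> b)) \<partial>M)"
      by (intro Bochner_Integration.integral_cong refl euclidean_inner)
    also have "\<dots> = (\<Sum>b\<in>Basis. (\<integral>\<omega>. (\<xi> i \<omega> \<bullet> b) * (\<xi> j \<omega> \<bullet> b) \<partial>M))"
      by (subst Bochner_Integration.integral_sum) (auto intro: int_compprod[OF \<xi>M[OF i] \<xi>M[OF j] i\<xi>2[OF i] i\<xi>2[OF j]])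
    also have "\<dots> = 0" using each by simp
    finally show ?thesis .
  qed
  have ii: "integrable M (\<lambda>\<omega>. \<xi> i \<omega> \<bullet> \<xi> j \<omega>)" if "i \<in> Gs" "j \<in> Gs" for i j
    by (rule int_inner[OF \<xi>M \<xi>M i\<xi>2 i\<xi>2]) (use that in auto)
  have iai: "integrable M (\<lambda>\<omega>. a \<omega> \<bullet> \<xi> i \<omega>)" if "i \<in> Gs" for i
    by (rule int_inner[OF aM \<xi>M ia2 i\<xi>2]) (use that in auto)
  have iR: "integrable M (\<lambda>\<omega>. \<Sum>i\<in>Gs. \<Sum>j\<in>Gs. \<xi> i \<omega> \<bullet> \<xi> j \<omega>)"
    using ii by (intro Bochner_Integration.integrable_sum) auto
  have iP: "integrable M (\<lambda>\<omega>. \<Sum>i\<in>Gs. a \<omega> \<bullet> \<xi> i \<omega>)"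
    using iai by (intro Bochner_Integration.integrable_sum) auto
  have K5: "(\<integral>\<omega>. (\<Sum>i\<in>Gs. \<Sum>j\<in>Gs. \<xi> i \<omega> \<bullet> \<xi> j \<omega>) \<partial>M) \<le> G * \<sigma>^2"
  proof -
    have "(\<integral>\<omega>. (\<Sum>i\<in>Gs. \<Sum>j\<in>Gs. \<xi> i \<omega> \<bullet> \<xi> j \<omega>) \<partial>M) = (\<Sum>i\<in>Gs. (\<integral>\<omega>. (\<Sum>j\<in>Gs. \<xi> i \<omega> \<bullet> \<xi> j \<omega>) \<partial>M))"
      by (subst Bochner_Integration.integral_sum) (use ii in \<open>auto intro!: Bochner_Integration.integrable_sum\<close>)
    also have "\<dots> = (\<Sum>i\<in>Gs. (\<integral>\<omega>. norm (\<xi> i \<omega>)^2 \<partial>M))"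
    proof (rule sum.cong[OF refl])
      fix i assume i: "i \<in> Gs"
      have "(\<integral>\<omega>. (\<Sum>j\<in>Gs. \<xi> i \<omega> \<bullet> \<xi> j \<omega>) \<partial>M) = (\<Sum>j\<in>Gs. (\<integral>\<omega>. \<xi> i \<omega> \<bullet> \<xi> j \<omega> \<partial>M))"
        by (subst Bochner_Integration.integral_sum) (use ii i in auto)
      also have "\<dots> = (\<Sum>j\<in>Gs. if j = i then (\<integral>\<omega>. \<xi> i \<omega> \<bullet> \<xi> i \<omega> \<partial>M) else 0)"
        by (rule sum.cong[OF refl]) (use K4 i in auto)
      also have "\<dots> = (\<integral>\<omega>. \<xi> i \<omega> \<bullet> \<xi> i \<omega> \<partial>M)"
        using finG i by simp
      also have "\<dots> = (\<integral>\<omega>. norm (\<xi> i \<omega>)^2 \<partial>M)" by (simp add: power2_norm_eq_inner)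
      finally show "(\<integral>\<omega>. (\<Sum>j\<in>Gs. \<xi> i \<omega> \<bullet> \<xi> j \<omega>) \<partial>M) = (\<integral>\<omega>. norm (\<xi> i \<omega>)^2 \<partial>M)" .
    qed
    also have "\<dots> \<le> (\<Sum>i\<in>Gs. \<sigma>^2)" by (rule sum_mono) (rule K3)
    also have "\<dots> = G * \<sigma>^2" by (simp add: G_def)
    finally show ?thesis .
  qed

  define Q where "Q = (\<lambda>\<omega>. f (x \<omega>) + (L*\<gamma>^2/2 - \<gamma>) * norm (a \<omega>)^2
      + (L*\<gamma>^2 - \<gamma>)/G * (\<Sum>i\<in>Gs. a \<omega> \<bullet> \<xi> i \<omega>)
      + L*\<gamma>^2/(2*G^2) * (\<Sum>i\<in>Gs. \<Sum>j\<in>Gs. \<xi> i \<omega> \<bullet> \<xi> j \<omega>))"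
  define v where "v = (\<lambda>i::nat. if i \<in> Gs then 1/G else 0)"
  have GsI: "{1..n} \<inter> Gs = Gs" "{Suc 0..n} \<inter> Gs = Gs" using Gs_sub by auto
  have vS: "v \<in> unit_simplex n"
  proof -
    have "(\<Sum>i=1..n. v i) = (\<Sum>i\<in>Gs. 1/G)"
      unfolding v_def by (subst sum.inter_restrict[symmetric]) (auto simp: GsI)
    also have "\<dots> = 1" using Gpos by (simp add: G_def)
    finally show ?thesis unfolding unit_simplex_def using Gpos by (auto simp: v_def)
  qed
  have ptw: "f (x \<omega> - \<gamma> *\<^sub>R (\<Sum>i=1..n. v i *\<^sub>R g i \<omega>)) \<le> Q \<omega>" for \<omega>
  proof -
    define \<eta> where "\<eta> = (1/G) *\<^sub>R (\<Sum>i\<in>Gs. \<xi> i \<omega>)"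
    have "(\<Sum>i=1..n. v i *\<^sub>R g i \<omega>) = (\<Sum>i=1..n. if i \<in> Gs then (1/G) *\<^sub>R g i \<omega> else 0)"
      by (rule sum.cong) (auto simp: v_def)
    also have "\<dots> = (\<Sum>i\<in>Gs. (1/G) *\<^sub>R g i \<omega>)"
      by (subst sum.inter_restrict[symmetric]) (auto simp: GsI)
    also have "\<dots> = (1/G) *\<^sub>R (\<Sum>i\<in>Gs. a \<omega> + \<xi> i \<omega>)"
      by (simp add: scaleR_sum_right \<xi>_def)
    also have "\<dots> = (1/G) *\<^sub>R (G *\<^sub>R a \<omega> + (\<Sum>i\<in>Gs. \<xi> i \<omega>))"
      by (simp add: sum.distrib G_def sum_constant_scaleR)
    also have "\<dots> = a \<omega> + \<eta>"
      using Gpos by (simp add: \<eta>_def scaleR_add_right)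
    finally have sv: "(\<Sum>i=1..n. v i *\<^sub>R g i \<omega>) = a \<omega> + \<eta>" .
    have sm: "f (x \<omega> - \<gamma> *\<^sub>R (a \<omega> + \<eta>)) \<le> f (x \<omega>) + gradf (x \<omega>) \<bullet> ((x \<omega> - \<gamma> *\<^sub>R (a \<omega> + \<eta>)) - x \<omega>)
         + L / 2 * (norm ((x \<omega> - \<gamma> *\<^sub>R (a \<omega> + \<eta>)) - x \<omega>))^2"
      by (rule smooth)
    have h1: "a \<omega> \<bullet> \<eta> = (1/G) * (\<Sum>i\<in>Gs. a \<omega> \<bullet> \<xi> i \<omega>)"
      by (simp add: \<eta>_def inner_sum_right)
    have h2: "\<eta> \<bullet> \<eta> = (1/G)^2 * (\<Sum>i\<in>Gs. \<Sum>j\<in>Gs. \<xi> i \<omega> \<bullet> \<xi> j \<omega>)"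
      by (simp add: \<eta>_def inner_sum_right inner_sum_left power2_eq_square sum_distrib_left inner_commute)
    have h3: "(norm ((x \<omega> - \<gamma> *\<^sub>R (a \<omega> + \<eta>)) - x \<omega>))^2 = \<gamma>^2 * (a \<omega> \<bullet> a \<omega> + 2 * (a \<omega> \<bullet> \<eta>) + \<eta> \<bullet> \<eta>)"
      unfolding power2_norm_eq_inner
      by (simp add: inner_add_left inner_add_right inner_diff_left inner_diff_right inner_commute power2_eq_square algebra_simps)
    have h4: "gradf (x \<omega>) \<bullet> ((x \<omega> - \<gamma> *\<^sub>R (a \<omega> + \<eta>)) - x \<omega>) = - \<gamma> * (a \<omega> \<bullet> a \<omega> + a \<omega> \<bullet> \<eta>)"
      by (simp add: a_def inner_add_right)
    have h5: "norm (a \<omega>)^2 = a \<omega> \<bullet> a \<omega>" by (simp add: power2_norm_eq_inner)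
    have "f (x \<omega>) + gradf (x \<omega>) \<bullet> ((x \<omega> - \<gamma> *\<^sub>R (a \<omega> + \<eta>)) - x \<omega>)
         + L / 2 * (norm ((x \<omega> - \<gamma> *\<^sub>R (a \<omega> + \<eta>)) - x \<omega>))^2 = Q \<omega>"
      unfolding Q_def h3 h4 h5 h1 h2 using Gpos by (simp add: field_simps power2_eq_square)
    then show ?thesis using sm sv by simp
  qed
  have inf_le: "Inf ((\<lambda>v. f (x \<omega> - \<gamma> *\<^sub>R (\<Sum>i=1..n. v i *\<^sub>R g i \<omega>))) ` unit_simplex n) \<le> Q \<omega>" for \<omega>
    using cInf_lower[OF imageI[OF vS] simplex_bdd[OF cont, where z="x \<omega>" and \<gamma>=\<gamma> and h="\<lambda>i. g i \<omega>"]] ptw[of \<omega>] by linarith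
  have AE1: "AE \<omega> in M. real_cond_exp M (gen_sigma M (insert x (g ` {1..n}))) (\<lambda>\<omega>. f (x' \<omega>)) \<omega> \<le> \<delta> + Q \<omega>"
    using subproblem
  proof (rule eventually_mono)
    fix \<omega> assume "real_cond_exp M (gen_sigma M (insert x (g ` {1..n}))) (\<lambda>\<omega>. f (x' \<omega>)) \<omega>
          - Inf ((\<lambda>v. f (x \<omega> - \<gamma> *\<^sub>R (\<Sum>i=1..n. v i *\<^sub>R g i \<omega>))) ` unit_simplex n) \<le> \<delta>"
    then show "real_cond_exp M (gen_sigma M (insert x (g ` {1..n}))) (\<lambda>\<omega>. f (x' \<omega>)) \<omega> \<le> \<delta> + Q \<omega>"
      using inf_le[of \<omega>] by linarith
  qed
  have SH: "sigma_finite_subalgebra M (gen_sigma M (insert x (g ` {1..n})))"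
    by (rule finite_measure_subalgebra_is_sigma_finite[OF gen_sigma_sub[OF prob]]) (use x_meas g_meas in auto)
  have iQ: "integrable M Q"
    unfolding Q_def
    by (intro Bochner_Integration.integrable_add Bochner_Integration.integrable_mult_right int_fx ia2 iP iR)
  have "(\<integral>\<omega>. f (x' \<omega>) \<partial>M) = (\<integral>\<omega>. real_cond_exp M (gen_sigma M (insert x (g ` {1..n}))) (\<lambda>\<omega>. f (x' \<omega>)) \<omega> \<partial>M)"
    by (rule sigma_finite_subalgebra.real_cond_exp_int(2)[OF SH int_fx', symmetric])
  also have "\<dots> \<le> (\<integral>\<omega>. \<delta> + Q \<omega> \<partial>M)"
    by (rule integral_mono_AE[OF sigma_finite_subalgebra.real_cond_exp_int(1)[OF SH int_fx'] _ AE1]) (use iQ in auto)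
  also have "\<dots> = \<delta> + (\<integral>\<omega>. Q \<omega> \<partial>M)"
    using iQ by (simp add: prob_space)
  also have "(\<integral>\<omega>. Q \<omega> \<partial>M) = (\<integral>\<omega>. f (x \<omega>) \<partial>M) + (L*\<gamma>^2/2 - \<gamma>) * (\<integral>\<omega>. norm (a \<omega>)^2 \<partial>M)
      + (L*\<gamma>^2 - \<gamma>)/G * (\<integral>\<omega>. (\<Sum>i\<in>Gs. a \<omega> \<bullet> \<xi> i \<omega>) \<partial>M)
      + L*\<gamma>^2/(2*G^2) * (\<integral>\<omega>. (\<Sum>i\<in>Gs. \<Sum>j\<in>Gs. \<xi> i \<omega> \<bullet> \<xi> j \<omega>) \<partial>M)"
    unfolding Q_def using int_fx ia2 iP iR by simp
  also have "(\<integral>\<omega>. (\<Sum>i\<in>Gs. a \<omega> \<bullet> \<xi> i \<omega>) \<partial>M) = 0"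
    by (subst Bochner_Integration.integral_sum) (use iai K2 in auto)
  finally have main: "(\<integral>\<omega>. f (x' \<omega>) \<partial>M) \<le> \<delta> + ((\<integral>\<omega>. f (x \<omega>) \<partial>M) + (L*\<gamma>^2/2 - \<gamma>) * (\<integral>\<omega>. norm (a \<omega>)^2 \<partial>M)
      + L*\<gamma>^2/(2*G^2) * (\<integral>\<omega>. (\<Sum>i\<in>Gs. \<Sum>j\<in>Gs. \<xi> i \<omega> \<bullet> \<xi> j \<omega>) \<partial>M))" by simp
  have A0: "0 \<le> (\<integral>\<omega>. norm (a \<omega>)^2 \<partial>M)" by (intro integral_nonneg_AE AE_I2) simp
  have Lg: "2 * L * \<gamma> \<le> 1"
    using gamma_le Lpos by (simp add: field_simps)
  have c1: "L*\<gamma>^2/2 - \<gamma> \<le> - \<gamma> / 2"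
  proof -
    have "L * \<gamma>^2 = (L * \<gamma>) * \<gamma>" by (simp add: power2_eq_square)
    also have "\<dots> \<le> (1/2) * \<gamma>" using Lg gamma_pos by (intro mult_right_mono) auto
    finally have "L * \<gamma>^2 \<le> (1/2) * \<gamma>" .
    then show ?thesis using gamma_pos by linarith
  qed
  have t1: "(L*\<gamma>^2/2 - \<gamma>) * (\<integral>\<omega>. norm (a \<omega>)^2 \<partial>M) \<le> - \<gamma> / 2 * (\<integral>\<omega>. norm (a \<omega>)^2 \<partial>M)"
    by (rule mult_right_mono[OF c1 A0])
  have t2: "L*\<gamma>^2/(2*G^2) * (\<integral>\<omega>. (\<Sum>i\<in>Gs. \<Sum>j\<in>Gs. \<xi> i \<omega> \<bullet> \<xi> j \<omega>) \<partial>M) \<le> L*\<gamma>^2/(2*G^2) * (G * \<sigma>^2)"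
    using Lpos Gpos by (intro mult_left_mono[OF K5]) auto
  have t3: "L*\<gamma>^2/(2*G^2) * (G * \<sigma>^2) \<le> \<gamma>^2 * L * \<sigma>^2 / G"
  proof -
    have e: "L*\<gamma>^2/(2*G^2) * (G * \<sigma>^2) = (\<gamma>^2 * L * \<sigma>^2 / G) / 2"
      using Gpos by (simp add: field_simps power2_eq_square)
    have n: "0 \<le> \<gamma>^2 * L * \<sigma>^2 / G" using Lpos Gpos by simp
    have hh: "\<And>c::real. 0 \<le> c \<Longrightarrow> c / 2 \<le> c" by linarith
    show ?thesis by (subst e) (rule hh[OF n])
  qed
  have "(\<integral>\<omega>. (norm (gradf (x \<omega>)))\<^sup>2 \<partial>M) = (\<integral>\<omega>. norm (a \<omega>)^2 \<partial>M)" by (simp add: a_def)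
  then show ?thesis using main t1 t2 t3 by (simp add: G_def)
qed

end
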